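(* Let $(T_1,F_1)$ and $(T_2,F_2)$ be proper scoring rules such that $T_1,T_2,F_1,F_2$ are continuous at $0$ and at $1$. Then $(T_1-T_2,\,F_1-F_2)$ is a proper scoring rule if and only if either $T_1-T_2$ is non-decreasing or $F_1-F_2$ is non-increasing.
   Context: A pair of functions $(T,F)$ from $[0,1]$ to $[-\infty,\infty)$, finite on $(0,1)$, is a proper scoring rule if for all $p,q\in[0,1]$, $$pT(p)+(1-p)F(p)\ \ge\ pT(q)+(1-p)F(q),$$ with the convention $0\cdot(-\infty)=0$. *)

theory Defs
  imports "HOL-Analysis.Analysis"
begin

text \<open>A pair of functions (T,F) from [0,1] to [-infinity,infinity), finite on (0,1),
  satisfying the properness inequality for all p,q in [0,1].  In ereal, 0 * (-infinity) = 0.\<close>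
definition proper_scoring_rule :: "(real \<Rightarrow> ereal) \<Rightarrow> (real \<Rightarrow> ereal) \<Rightarrow> bool" where
  "proper_scoring_rule T F \<longleftrightarrow>
     (\<forall>p\<in>{0..1}. T p \<noteq> \<infinity> \<and> F p \<noteq> \<infinity>) \<and>
     (\<forall>p\<in>{0<..<1}. \<bar>T p\<bar> \<noteq> \<infinity> \<and> \<bar>F p\<bar> \<noteq> \<infinity>) \<and>
     (\<forall>p\<in>{0..1}. \<forall>q\<in>{0..1}.
        ereal p * T p + ereal (1 - p) * F p \<ge> ereal p * T q + ereal (1 - p) * F q)"

text \<open>Pointwise difference of two [-infinity,infinity)-valued functions on [0,1].
  Where both values are -infinity (possible only at the endpoints 0, 1) the difference
  is undefined pointwise; it is taken to be the limit of the difference from inside (0,1),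
  i.e. the continuous extension.\<close>
definition sr_diff :: "(real \<Rightarrow> ereal) \<Rightarrow> (real \<Rightarrow> ereal) \<Rightarrow> real \<Rightarrow> ereal" where
  "sr_diff T1 T2 p =
     (if T1 p = -\<infinity> \<and> T2 p = -\<infinity>
      then Lim (at p within {0<..<1}) (\<lambda>x. T1 x - T2 x)
      else T1 p - T2 p)"

end

theory Submission
  imports Defs
begin


definition rprop :: "(real \<Rightarrow> real) \<Rightarrow> (real \<Rightarrow> real) \<Rightarrow> bool" where
  "rprop t f \<longleftrightarrow> (\<forall>p\<in>{0<..<1}. \<forall>q\<in>{0<..<1}. p * t q + (1-p) * f q \<le> p * t p + (1-p) * f p)"

lemma GL:
  fixes \<phi> :: "real \<Rightarrow> real \<Rightarrow> real" and f :: "real \<Rightarrow> real"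
  assumes st: "s \<le> t" and K: "K \<ge> 0"
    and fm: "\<And>u v. s \<le> u \<Longrightarrow> u \<le> v \<Longrightarrow> v \<le> t \<Longrightarrow> f u \<le> f v"
    and sup: "\<And>u v w. s \<le> u \<Longrightarrow> u \<le> v \<Longrightarrow> v \<le> w \<Longrightarrow> w \<le> t \<Longrightarrow> \<phi> u v + \<phi> v w \<le> \<phi> u w"
    and loc: "\<And>u v. s \<le> u \<Longrightarrow> u \<le> v \<Longrightarrow> v \<le> t \<Longrightarrow> -(K*(v-u)*(f v - f u)) \<le> \<phi> u v"
  shows "0 \<le> \<phi> s t"
proof -
  have bound: "- (K*(t-s)*(f t - f s)) / real n \<le> \<phi> s t" if n: "n > 0" for n :: nat
  proof -
    define h where "h = (t - s) / real n"
    define x where "x k = s + real k * h" for k :: nat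
    have h0: "h \<ge> 0" using st n by (simp add: h_def)
    have xle: "x k \<le> t" if "k \<le> n" for k
    proof -
      have "real k * h \<le> real n * h" using that h0 by (simp add: mult_right_mono)
      also have "real n * h = t - s" using n by (simp add: h_def)
      finally show ?thesis by (simp add: x_def)
    qed
    have xge: "s \<le> x k" for k using h0 by (simp add: x_def)
    have xmono: "x k \<le> x (Suc k)" for k using h0 by (simp add: x_def algebra_simps)
    have xdiff: "x (Suc k) - x k = h" for k by (simp add: x_def algebra_simps)
    have "m \<le> n \<longrightarrow> -(K*h*(f (x m) - f s)) \<le> \<phi> s (x m)" for m
    proof (induction m)
      case 0
      have "x 0 = s" by (simp add: x_def)
      then show ?case using loc[of s s] st by simp
    next
      case (Suc m)
      show ?case
      proof
        assume m: "Suc m \<le> n"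
        have ih: "-(K*h*(f (x m) - f s)) \<le> \<phi> s (x m)" using Suc m by simp
        have l: "-(K*h*(f (x (Suc m)) - f (x m))) \<le> \<phi> (x m) (x (Suc m))"
          using loc[of "x m" "x (Suc m)"] xge xmono xle[of "Suc m"] m xdiff by simp
        have "\<phi> s (x m) + \<phi> (x m) (x (Suc m)) \<le> \<phi> s (x (Suc m))"
          using sup[of s "x m" "x (Suc m)"] xge xmono xle[of "Suc m"] m by simp
        moreover have "-(K*h*(f (x (Suc m)) - f s)) = -(K*h*(f (x m) - f s)) + -(K*h*(f (x (Suc m)) - f (x m)))"
          by (simp add: algebra_simps)
        ultimately show "-(K*h*(f (x (Suc m)) - f s)) \<le> \<phi> s (x (Suc m))" using ih l by linarith
      qed
    qed
    then have "-(K*h*(f (x n) - f s)) \<le> \<phi> s (x n)" by simp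
    moreover have "x n = t" using n by (simp add: x_def h_def)
    ultimately show ?thesis by (simp add: h_def)
  qed
  show ?thesis
  proof (rule ccontr)
    assume "\<not> 0 \<le> \<phi> s t"
    then have neg: "\<phi> s t < 0" by simp
    define C where "C = K*(t-s)*(f t - f s)"
    have C0: "C \<ge> 0" using K st fm[of s t] by (simp add: C_def)
    obtain n :: nat where n: "C / (- \<phi> s t) < real n" using reals_Archimedean2 by blast
    have npos: "n > 0" using n C0 neg
      by (metis divide_nonneg_pos neg_0_less_iff_less not_gr0 not_less of_nat_0)
    have "C < real n * (- \<phi> s t)" using n neg pos_divide_less_eq[of "- \<phi> s t" C "real n"] by simp
    then have "- C / real n > \<phi> s t" using npos by (simp add: field_simps)
    with bound[OF npos] show False unfolding C_def by linarith
  qed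
qed

lemma rprop_D:
  assumes "rprop t f" "p \<in> {0<..<1}" "q \<in> {0<..<1}"
  shows "0 \<le> p * (t p - t q) + (1-p) * (f p - f q)"
  using assms unfolding rprop_def by (auto simp: algebra_simps)

lemma rprop_mono:
  assumes r: "rprop t f" and pq: "0 < q" "q \<le> p" "p < 1"
  shows "t q \<le> t p \<and> f p \<le> f q"
proof -
  define a where "a = t p - t q"
  define b where "b = f p - f q"
  have e1: "0 \<le> p * a + (1-p) * b" using rprop_D[OF r, of p q] pq by (simp add: a_def b_def)
  have e2: "0 \<le> q * (-a) + (1-q) * (-b)" using rprop_D[OF r, of q p] pq by (simp add: a_def b_def algebra_simps)
  have m1: "0 \<le> (1-q) * (p * a + (1-p) * b)" using e1 pq by simp
  have m2: "0 \<le> (1-p) * (q * (-a) + (1-q) * (-b))" using e2 pq by simp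
  have m3: "0 \<le> q * (p * a + (1-p) * b)" using e1 pq by simp
  have m4: "0 \<le> p * (q * (-a) + (1-q) * (-b))" using e2 pq by simp
  have A: "0 \<le> (p - q) * a" using m1 m2 by (simp add: algebra_simps)
  have B: "0 \<le> (p - q) * (-b)" using m3 m4 by (simp add: algebra_simps)
  show ?thesis
  proof (cases "p = q")
    case True then show ?thesis by simp
  next
    case False
    then have "p - q > 0" using pq by simp
    then have "a \<ge> 0" "-b \<ge> 0" using A B by (simp_all add: zero_le_mult_iff mult_le_0_iff)
    then show ?thesis by (simp add: a_def b_def)
  qed
qed

lemma bracket:
  assumes r: "rprop t f" and uv: "0 < u" "u \<le> v" "v < 1"
  shows "(1-v) * ((t v - f v) - (t u - f u)) \<le> t v - t u"
    and "t v - t u \<le> (1-u) * ((t v - f v) - (t u - f u))"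
proof -
  have e1: "0 \<le> v * (t v - t u) + (1-v) * (f v - f u)" using rprop_D[OF r, of v u] uv by simp
  have e2: "0 \<le> u * (t u - t v) + (1-u) * (f u - f v)" using rprop_D[OF r, of u v] uv by simp
  show "(1-v) * ((t v - f v) - (t u - f u)) \<le> t v - t u" using e1 by (simp add: algebra_simps)
  show "t v - t u \<le> (1-u) * ((t v - f v) - (t u - f u))" using e2 by (simp add: algebra_simps)
qed

lemma g_mono:
  assumes r: "rprop t f" and uv: "0 < u" "u \<le> v" "v < 1"
  shows "t u - f u \<le> t v - f v"
proof -
  have "(1-v) * ((t v - f v) - (t u - f u)) \<le> (1-u) * ((t v - f v) - (t u - f u))"
    using bracket[OF r uv] by linarith
  then have "0 \<le> (v - u) * ((t v - f v) - (t u - f u))" by (simp add: algebra_simps)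
  then show ?thesis using uv
    by (cases "u = v") (auto simp: zero_le_mult_iff)
qed

lemma aux_div:
  fixes X Y c d :: real
  assumes "0 < c" "c \<le> d" "d * X \<ge> -Y" "Y \<ge> 0"
  shows "-(1/c * Y) \<le> X"
proof (cases "X \<ge> 0")
  case True
  have "Y / c \<ge> 0" using assms by simp
  then show ?thesis using True by simp
next
  case False
  then have "c * X \<ge> d * X" using assms by (simp add: mult_right_mono_neg)
  then have "c * X \<ge> -Y" using assms by linarith
  then show ?thesis using assms by (simp add: field_simps)
qed

lemma IM_GM:
  assumes r1: "rprop t1 f1" and r2: "rprop t2 f2"
    and IM: "\<And>u v. 0 < u \<Longrightarrow> u \<le> v \<Longrightarrow> v < 1 \<Longrightarrow> t1 u - t2 u \<le> t1 v - t2 v"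
    and qp: "0 < q" "q \<le> p" "p < 1"
  shows "(t1 q - f1 q) - (t2 q - f2 q) \<le> (t1 p - f1 p) - (t2 p - f2 p)"
proof -
  define g1 where "g1 x = t1 x - f1 x" for x
  define g2 where "g2 x = t2 x - f2 x" for x
  have "0 \<le> (\<lambda>u v. (g1 v - g1 u) - (g2 v - g2 u)) q p"
  proof (rule GL[where f = g2 and K = "1/(1-p)" and \<phi> = "\<lambda>u v. (g1 v - g1 u) - (g2 v - g2 u)"])
    show "q \<le> p" "0 \<le> 1/(1-p)" using qp by auto
    show "g2 u \<le> g2 v" if "q \<le> u" "u \<le> v" "v \<le> p" for u v
      using g_mono[OF r2, of u v] that qp unfolding g2_def by linarith
    show "(g1 v - g1 u - (g2 v - g2 u)) + (g1 w - g1 v - (g2 w - g2 v)) \<le> g1 w - g1 u - (g2 w - g2 u)"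
      if "q \<le> u" "u \<le> v" "v \<le> w" "w \<le> p" for u v w
      by simp
    show "- (1 / (1 - p) * (v - u) * (g2 v - g2 u)) \<le> g1 v - g1 u - (g2 v - g2 u)"
      if "q \<le> u" "u \<le> v" "v \<le> p" for u v
    proof -
      have u: "0 < u" "u \<le> v" "v < 1" using that qp by auto
      have b1: "t1 v - t1 u \<le> (1-u) * (g1 v - g1 u)" using bracket(2)[OF r1 u] by (simp add: g1_def)
      have b2: "(1-v) * (g2 v - g2 u) \<le> t2 v - t2 u" using bracket(1)[OF r2 u] by (simp add: g2_def)
      have "t2 v - t2 u \<le> t1 v - t1 u" using IM[OF u] by linarith
      then have "(1-u) * (g1 v - g1 u) \<ge> (1-v) * (g2 v - g2 u)" using b1 b2 by linarith
      then have "(1-u) * (g1 v - g1 u - (g2 v - g2 u)) \<ge> - ((v-u) * (g2 v - g2 u))"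
        by (simp add: algebra_simps)
      moreover have "(v-u) * (g2 v - g2 u) \<ge> 0" using g_mono[OF r2 u] u by (simp add: g2_def)
      ultimately have "-(1/(1-p) * ((v-u) * (g2 v - g2 u))) \<le> g1 v - g1 u - (g2 v - g2 u)"
        using aux_div[of "1-p" "1-u"] that qp by auto
      then show ?thesis by (simp add: mult.assoc)
    qed
  qed
  then show ?thesis by (simp add: g1_def g2_def)
qed

lemma IA_GM:
  assumes r1: "rprop t1 f1" and r2: "rprop t2 f2"
    and IA: "\<And>u v. 0 < u \<Longrightarrow> u \<le> v \<Longrightarrow> v < 1 \<Longrightarrow> f1 v - f2 v \<le> f1 u - f2 u"
    and qp: "0 < q" "q \<le> p" "p < 1"
  shows "(t1 q - f1 q) - (t2 q - f2 q) \<le> (t1 p - f1 p) - (t2 p - f2 p)"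
proof -
  define g1 where "g1 x = t1 x - f1 x" for x
  define g2 where "g2 x = t2 x - f2 x" for x
  have "0 \<le> (\<lambda>u v. (g1 v - g1 u) - (g2 v - g2 u)) q p"
  proof (rule GL[where f = g2 and K = "1/q" and \<phi> = "\<lambda>u v. (g1 v - g1 u) - (g2 v - g2 u)"])
    show "q \<le> p" "0 \<le> 1/q" using qp by auto
    show "g2 u \<le> g2 v" if "q \<le> u" "u \<le> v" "v \<le> p" for u v
      using g_mono[OF r2, of u v] that qp unfolding g2_def by linarith
    show "(g1 v - g1 u - (g2 v - g2 u)) + (g1 w - g1 v - (g2 w - g2 v)) \<le> g1 w - g1 u - (g2 w - g2 u)"
      if "q \<le> u" "u \<le> v" "v \<le> w" "w \<le> p" for u v w
      by simp
    show "- (1 / q * (v - u) * (g2 v - g2 u)) \<le> g1 v - g1 u - (g2 v - g2 u)"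
      if "q \<le> u" "u \<le> v" "v \<le> p" for u v
    proof -
      have u: "0 < u" "u \<le> v" "v < 1" using that qp by auto
      have b1: "(1-v) * (g1 v - g1 u) \<le> t1 v - t1 u" using bracket(1)[OF r1 u] by (simp add: g1_def)
      have b2: "t2 v - t2 u \<le> (1-u) * (g2 v - g2 u)" using bracket(2)[OF r2 u] by (simp add: g2_def)
      have "f1 v - f1 u \<le> f2 v - f2 u" using IA[OF u] by linarith
      then have "(f1 v - f1 u) + v * (g1 v - g1 u) \<ge> 0" using b1 by (simp add: g1_def algebra_simps)
      then have "v * (g1 v - g1 u) \<ge> u * (g2 v - g2 u)" using b2 \<open>f1 v - f1 u \<le> f2 v - f2 u\<close>
        by (simp add: g2_def algebra_simps)
      then have "v * (g1 v - g1 u - (g2 v - g2 u)) \<ge> - ((v-u) * (g2 v - g2 u))"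
        by (simp add: algebra_simps)
      moreover have "(v-u) * (g2 v - g2 u) \<ge> 0" using g_mono[OF r2 u] u by (simp add: g2_def)
      ultimately have "-(1/q * ((v-u) * (g2 v - g2 u))) \<le> g1 v - g1 u - (g2 v - g2 u)"
        using aux_div[of "q" "v"] that qp by auto
      then show ?thesis by (simp add: mult.assoc)
    qed
  qed
  then show ?thesis by (simp add: g1_def g2_def)
qed

definition EE :: "(real \<Rightarrow> real) \<Rightarrow> (real \<Rightarrow> real) \<Rightarrow> real \<Rightarrow> real \<Rightarrow> real" where
  "EE t f p q = p * (t p - t q) + (1-p) * (f p - f q)"

lemma EE_split: "EE t f x q = EE t f x m + EE t f m q + (x - m) * ((t m - f m) - (t q - f q))"
  unfolding EE_def by (simp add: algebra_simps)

lemma EE_sym: "EE t f x q + EE t f q x = (x - q) * ((t x - f x) - (t q - f q))"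
  unfolding EE_def by (simp add: algebra_simps)

lemma EE_diff: "EE (\<lambda>x. t1 x - t2 x) (\<lambda>x. f1 x - f2 x) p q = EE t1 f1 p q - EE t2 f2 p q"
  unfolding EE_def by (simp add: algebra_simps)

lemma EE_nonneg: "rprop t f \<Longrightarrow> p \<in> {0<..<1} \<Longrightarrow> q \<in> {0<..<1} \<Longrightarrow> 0 \<le> EE t f p q"
  unfolding EE_def using rprop_D by blast

lemma rprop_EE: "(\<And>p q. p \<in> {0<..<1} \<Longrightarrow> q \<in> {0<..<1} \<Longrightarrow> 0 \<le> EE t f p q) \<Longrightarrow> rprop t f"
  unfolding rprop_def EE_def by (auto simp: algebra_simps)

lemma GM_IP:
  assumes r1: "rprop t1 f1" and r2: "rprop t2 f2"
    and GM: "\<And>u v. 0 < u \<Longrightarrow> u \<le> v \<Longrightarrow> v < 1 \<Longrightarrow>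
       (t1 u - f1 u) - (t2 u - f2 u) \<le> (t1 v - f1 v) - (t2 v - f2 v)"
  shows "rprop (\<lambda>x. t1 x - t2 x) (\<lambda>x. f1 x - f2 x)"
proof (rule rprop_EE)
  define tD where "tD x = t1 x - t2 x" for x
  define fD where "fD x = f1 x - f2 x" for x
  define g2 where "g2 x = t2 x - f2 x" for x
  have tDfD: "(\<lambda>x. t1 x - t2 x) = tD" "(\<lambda>x. f1 x - f2 x) = fD" by (auto simp: tD_def fD_def)
  have gD: "tD x - fD x = (t1 x - f1 x) - (t2 x - f2 x)" for x by (simp add: tD_def fD_def)
  have loc: "- (1 * (v - u) * (g2 v - g2 u)) \<le> EE tD fD a b"
    if "0 < u" "u \<le> v" "v < 1" "(a = v \<and> b = u) \<or> (a = u \<and> b = v)" for u v a b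
  proof -
    have ab: "a \<in> {0<..<1}" "b \<in> {0<..<1}" using that by auto
    have "EE tD fD a b = EE t1 f1 a b - EE t2 f2 a b" using EE_diff[of t1 t2 f1 f2] tDfD by simp
    moreover have "0 \<le> EE t1 f1 a b" using EE_nonneg[OF r1 ab] .
    moreover have "0 \<le> EE t2 f2 b a" using EE_nonneg[OF r2 ab(2,1)] .
    moreover have "EE t2 f2 a b + EE t2 f2 b a = (v - u) * (g2 v - g2 u)"
      using that EE_sym[of t2 f2 a b] by (auto simp: g2_def algebra_simps)
    ultimately show ?thesis by linarith
  qed
  fix p q :: real assume p: "p \<in> {0<..<1}" and q: "q \<in> {0<..<1}"
  show "0 \<le> EE (\<lambda>x. t1 x - t2 x) (\<lambda>x. f1 x - f2 x) p q"
    unfolding tDfD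
  proof (cases "q \<le> p")
    case True
    have "0 \<le> (\<lambda>u w. EE tD fD w u) q p"
    proof (rule GL[where f = g2 and K = 1 and \<phi> = "\<lambda>u w. EE tD fD w u"])
      show "q \<le> p" "(0::real) \<le> 1" using True by auto
      show "g2 u \<le> g2 v" if "q \<le> u" "u \<le> v" "v \<le> p" for u v
        using g_mono[OF r2, of u v] that p q unfolding g2_def by auto
      show "EE tD fD v u + EE tD fD w v \<le> EE tD fD w u"
        if "q \<le> u" "u \<le> v" "v \<le> w" "w \<le> p" for u v w
      proof -
        have "0 \<le> (w - v) * ((tD v - fD v) - (tD u - fD u))"
          using GM[of u v] that p q gD by auto
        then show ?thesis using EE_split[of tD fD w u v] by linarith
      qed
      show "- (1 * (v - u) * (g2 v - g2 u)) \<le> EE tD fD v u"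
        if "q \<le> u" "u \<le> v" "v \<le> p" for u v
        using loc[of u v v u] that p q by auto
    qed
    then show "0 \<le> EE tD fD p q" by simp
  next
    case False
    have "0 \<le> (\<lambda>u w. EE tD fD u w) p q"
    proof (rule GL[where f = g2 and K = 1 and \<phi> = "\<lambda>u w. EE tD fD u w"])
      show "p \<le> q" "(0::real) \<le> 1" using False by auto
      show "g2 u \<le> g2 v" if "p \<le> u" "u \<le> v" "v \<le> q" for u v
        using g_mono[OF r2, of u v] that p q unfolding g2_def by auto
      show "EE tD fD u v + EE tD fD v w \<le> EE tD fD u w"
        if "p \<le> u" "u \<le> v" "v \<le> w" "w \<le> q" for u v w
      proof -
        have "(tD v - fD v) - (tD w - fD w) \<le> 0"
          using GM[of v w] that p q gD by auto
        then have "0 \<le> (u - v) * ((tD v - fD v) - (tD w - fD w))"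
          using that by (simp add: mult_nonpos_nonpos)
        then show ?thesis using EE_split[of tD fD u w v] by linarith
      qed
      show "- (1 * (v - u) * (g2 v - g2 u)) \<le> EE tD fD u v"
        if "p \<le> u" "u \<le> v" "v \<le> q" for u v
        using loc[of u v u v] that p q by auto
    qed
    then show "0 \<le> EE tD fD p q" by simp
  qed
qed

lemma nontriv0: "\<not> trivial_limit (at (0::real) within {0<..<1})"
  by (simp add: trivial_limit_within islimpt_greaterThanLessThan1)

lemma nontriv1: "\<not> trivial_limit (at (1::real) within {0<..<1})"
  by (simp add: trivial_limit_within islimpt_greaterThanLessThan2)

lemma KF:
  fixes A B :: "real \<Rightarrow> ereal"
  assumes nt: "\<not> trivial_limit (at c within {0<..<1})"
    and Ac: "A c \<noteq> \<infinity>" and Bc: "B c \<noteq> \<infinity>"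
    and fin: "\<And>x. x \<in> {0<..<1} \<Longrightarrow> \<bar>A x\<bar> \<noteq> \<infinity> \<and> \<bar>B x\<bar> \<noteq> \<infinity>"
    and cA: "continuous (at c within {0..1}) A" and cB: "continuous (at c within {0..1}) B"
    and L: "(sr_diff A B \<longlongrightarrow> L) (at c within {0<..<1})"
  shows "sr_diff A B c = L"
proof -
  have ev: "eventually (\<lambda>x. sr_diff A B x = A x - B x) (at c within {0<..<1})"
  proof -
    have "sr_diff A B x = A x - B x" if "x \<in> {0<..<1}" for x
      using fin[OF that] by (auto simp: sr_diff_def)
    then show ?thesis unfolding eventually_at_filter by (intro always_eventually) auto
  qed
  have L': "((\<lambda>x. A x - B x) \<longlongrightarrow> L) (at c within {0<..<1})"
    using tendsto_cong[OF ev] L by simp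
  show ?thesis
  proof (cases "A c = -\<infinity> \<and> B c = -\<infinity>")
    case True
    then show ?thesis unfolding sr_diff_def using tendsto_Lim[OF nt L'] by simp
  next
    case False
    have tA: "(A \<longlongrightarrow> A c) (at c within {0<..<1})"
      using cA unfolding continuous_within by (rule tendsto_within_subset) auto
    have tB: "(B \<longlongrightarrow> B c) (at c within {0<..<1})"
      using cB unfolding continuous_within by (rule tendsto_within_subset) auto
    have "((\<lambda>x. A x + - B x) \<longlongrightarrow> A c + - B c) (at c within {0<..<1})"
      by (rule tendsto_add_ereal_general) (use False Ac Bc tA tB in \<open>auto simp: ereal_uminus_eq_reorder\<close>)
    then have "((\<lambda>x. A x - B x) \<longlongrightarrow> A c - B c) (at c within {0<..<1})"
      by (simp add: minus_ereal_def)
    then have "A c - B c = L" using tendsto_unique[OF nt _ L'] by blast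
    moreover have "sr_diff A B c = A c - B c" using False unfolding sr_diff_def by auto
    ultimately show ?thesis by simp
  qed
qed

lemma mono_lim0:
  fixes h :: "real \<Rightarrow> ereal"
  assumes m: "\<And>u v. 0 < u \<Longrightarrow> u \<le> v \<Longrightarrow> v < 1 \<Longrightarrow> h u \<le> h v"
  shows "(h \<longlongrightarrow> Inf (h ` {0<..<1})) (at 0 within {0<..<1})"
proof (rule order_tendstoI)
  fix a assume "a < Inf (h ` {0<..<1})"
  then have "\<forall>x\<in>{0<..<1}. a < h x" by (meson INF_lower less_le_trans)
  then show "eventually (\<lambda>x. a < h x) (at 0 within {0<..<1})"
    unfolding eventually_at_filter by (intro always_eventually) auto
next
  fix a assume "Inf (h ` {0<..<1}) < a"
  then obtain y where y: "y \<in> {0<..<1}" "h y < a" by (auto simp: INF_less_iff)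
  show "eventually (\<lambda>x. h x < a) (at 0 within {0<..<1})"
    unfolding eventually_at
  proof (intro exI[of _ y] conjI ballI impI)
    show "0 < y" using y by simp
    fix x :: real assume x: "x \<in> {0<..<1}" "x \<noteq> 0 \<and> dist x 0 < y"
    then have "h x \<le> h y" using m[of x y] y by (auto simp: dist_real_def)
    then show "h x < a" using y by simp
  qed
qed

lemma mono_lim1:
  fixes h :: "real \<Rightarrow> ereal"
  assumes m: "\<And>u v. 0 < u \<Longrightarrow> u \<le> v \<Longrightarrow> v < 1 \<Longrightarrow> h u \<le> h v"
  shows "(h \<longlongrightarrow> Sup (h ` {0<..<1})) (at 1 within {0<..<1})"
proof (rule order_tendstoI)
  fix a assume "a > Sup (h ` {0<..<1})"
  then have "\<forall>x\<in>{0<..<1}. h x < a" by (meson SUP_upper le_less_trans)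
  then show "eventually (\<lambda>x. h x < a) (at 1 within {0<..<1})"
    unfolding eventually_at_filter by (intro always_eventually) auto
next
  fix a assume "a < Sup (h ` {0<..<1})"
  then obtain y where y: "y \<in> {0<..<1}" "a < h y" by (auto simp: less_SUP_iff)
  show "eventually (\<lambda>x. a < h x) (at 1 within {0<..<1})"
    unfolding eventually_at
  proof (intro exI[of _ "1 - y"] conjI ballI impI)
    show "0 < 1 - y" using y by simp
    fix x :: real assume x: "x \<in> {0<..<1}" "x \<noteq> 1 \<and> dist x 1 < 1 - y"
    then have "h y \<le> h x" using m[of y x] y by (auto simp: dist_real_def)
    then show "a < h x" using y by simp
  qed
qed

lemma anti_lim0:
  fixes h :: "real \<Rightarrow> ereal"
  assumes m: "\<And>u v. 0 < u \<Longrightarrow> u \<le> v \<Longrightarrow> v < 1 \<Longrightarrow> h v \<le> h u"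
  shows "(h \<longlongrightarrow> Sup (h ` {0<..<1})) (at 0 within {0<..<1})"
proof (rule order_tendstoI)
  fix a assume "a > Sup (h ` {0<..<1})"
  then have "\<forall>x\<in>{0<..<1}. h x < a" by (meson SUP_upper le_less_trans)
  then show "eventually (\<lambda>x. h x < a) (at 0 within {0<..<1})"
    unfolding eventually_at_filter by (intro always_eventually) auto
next
  fix a assume "a < Sup (h ` {0<..<1})"
  then obtain y where y: "y \<in> {0<..<1}" "a < h y" by (auto simp: less_SUP_iff)
  show "eventually (\<lambda>x. a < h x) (at 0 within {0<..<1})"
    unfolding eventually_at
  proof (intro exI[of _ y] conjI ballI impI)
    show "0 < y" using y by simp
    fix x :: real assume x: "x \<in> {0<..<1}" "x \<noteq> 0 \<and> dist x 0 < y"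
    then have "h y \<le> h x" using m[of x y] y by (auto simp: dist_real_def)
    then show "a < h x" using y by simp
  qed
qed

lemma anti_lim1:
  fixes h :: "real \<Rightarrow> ereal"
  assumes m: "\<And>u v. 0 < u \<Longrightarrow> u \<le> v \<Longrightarrow> v < 1 \<Longrightarrow> h v \<le> h u"
  shows "(h \<longlongrightarrow> Inf (h ` {0<..<1})) (at 1 within {0<..<1})"
proof (rule order_tendstoI)
  fix a assume "a < Inf (h ` {0<..<1})"
  then have "\<forall>x\<in>{0<..<1}. a < h x" by (meson INF_lower less_le_trans)
  then show "eventually (\<lambda>x. a < h x) (at 1 within {0<..<1})"
    unfolding eventually_at_filter by (intro always_eventually) auto
next
  fix a assume "Inf (h ` {0<..<1}) < a"
  then obtain y where y: "y \<in> {0<..<1}" "h y < a" by (auto simp: INF_less_iff)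
  show "eventually (\<lambda>x. h x < a) (at 1 within {0<..<1})"
    unfolding eventually_at
  proof (intro exI[of _ "1 - y"] conjI ballI impI)
    show "0 < 1 - y" using y by simp
    fix x :: real assume x: "x \<in> {0<..<1}" "x \<noteq> 1 \<and> dist x 1 < 1 - y"
    then have "h x \<le> h y" using m[of y x] y by (auto simp: dist_real_def)
    then show "h x < a" using y by simp
  qed
qed

lemma proper_real:
  assumes "proper_scoring_rule T F"
  shows "rprop (\<lambda>x. real_of_ereal (T x)) (\<lambda>x. real_of_ereal (F x))"
    and "\<And>x. x \<in> {0<..<1} \<Longrightarrow> T x = ereal (real_of_ereal (T x)) \<and> F x = ereal (real_of_ereal (F x))"
    and "T 1 \<noteq> -\<infinity>" and "F 0 \<noteq> -\<infinity>"
proof -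
  note d = assms[unfolded proper_scoring_rule_def]
  show fin: "T x = ereal (real_of_ereal (T x)) \<and> F x = ereal (real_of_ereal (F x))" if "x \<in> {0<..<1}" for x
    using d that by (simp add: ereal_real)
  show "rprop (\<lambda>x. real_of_ereal (T x)) (\<lambda>x. real_of_ereal (F x))"
    unfolding rprop_def
  proof (intro ballI)
    fix p q :: real assume p: "p \<in> {0<..<1}" and q: "q \<in> {0<..<1}"
    have "ereal p * T q + ereal (1 - p) * F q \<le> ereal p * T p + ereal (1 - p) * F p"
      using d p q by auto
    then have "ereal p * ereal (real_of_ereal (T q)) + ereal (1 - p) * ereal (real_of_ereal (F q))
       \<le> ereal p * ereal (real_of_ereal (T p)) + ereal (1 - p) * ereal (real_of_ereal (F p))"
      using fin[OF p] fin[OF q] by metis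
    then show "p * real_of_ereal (T q) + (1 - p) * real_of_ereal (F q)
       \<le> p * real_of_ereal (T p) + (1 - p) * real_of_ereal (F p)" by simp
  qed
  have ii: "\<forall>p\<in>{0<..<1}. \<bar>T p\<bar> \<noteq> \<infinity> \<and> \<bar>F p\<bar> \<noteq> \<infinity>" using d by (rule conjunct1[OF conjunct2])
  have all: "\<forall>p\<in>{0..1}. \<forall>q\<in>{0..1}. ereal p * T q + ereal (1 - p) * F q \<le> ereal p * T p + ereal (1 - p) * F p"
    using d by blast
  have "ereal 1 * T (1/2) + ereal (1-1) * F (1/2) \<le> ereal 1 * T 1 + ereal (1-1) * F 1"
    using all[rule_format, of 1 "1/2"] by simp
  then have "T (1/2) \<le> T 1" by (simp add: zero_ereal_def[symmetric])
  moreover have "T (1/2) \<noteq> -\<infinity>" using ii[rule_format, of "1/2"] by auto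
  ultimately show "T 1 \<noteq> -\<infinity>" by auto
  have "ereal 0 * T (1/2) + ereal (1-0) * F (1/2) \<le> ereal 0 * T 0 + ereal (1-0) * F 0"
    using all[rule_format, of 0 "1/2"] by simp
  then have "F (1/2) \<le> F 0" by (simp add: zero_ereal_def[symmetric])
  moreover have "F (1/2) \<noteq> -\<infinity>" using ii[rule_format, of "1/2"] by auto
  ultimately show "F 0 \<noteq> -\<infinity>" by auto
qed

lemma fin_ereal: "(x::ereal) \<noteq> \<infinity> \<Longrightarrow> x \<noteq> -\<infinity> \<Longrightarrow> x = ereal (real_of_ereal x)"
  by (cases x) auto

theorem corollary4:
  fixes T1 F1 T2 F2 :: "real \<Rightarrow> ereal"
  assumes "proper_scoring_rule T1 F1" and "proper_scoring_rule T2 F2"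
    and "continuous (at 0 within {0..1}) T1" and "continuous (at 1 within {0..1}) T1"
    and "continuous (at 0 within {0..1}) T2" and "continuous (at 1 within {0..1}) T2"
    and "continuous (at 0 within {0..1}) F1" and "continuous (at 1 within {0..1}) F1"
    and "continuous (at 0 within {0..1}) F2" and "continuous (at 1 within {0..1}) F2"
  shows "proper_scoring_rule (sr_diff T1 T2) (sr_diff F1 F2) \<longleftrightarrow>
         (mono_on {0..1} (sr_diff T1 T2) \<or> antimono_on {0..1} (sr_diff F1 F2))"
proof -
  define I :: "real set" where "I = {0<..<1}"
  define t1 where "t1 = (\<lambda>x. real_of_ereal (T1 x))"
  define t2 where "t2 = (\<lambda>x. real_of_ereal (T2 x))"
  define f1 where "f1 = (\<lambda>x. real_of_ereal (F1 x))"
  define f2 where "f2 = (\<lambda>x. real_of_ereal (F2 x))"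
  define DT where "DT = sr_diff T1 T2"
  define DF where "DF = sr_diff F1 F2"
  note P1 = proper_real[OF assms(1)] and P2 = proper_real[OF assms(2)]
  have r1: "rprop t1 f1" using P1(1) unfolding t1_def f1_def .
  have r2: "rprop t2 f2" using P2(1) unfolding t2_def f2_def .
  have Ti: "T1 x = ereal (t1 x)" "T2 x = ereal (t2 x)" "F1 x = ereal (f1 x)" "F2 x = ereal (f2 x)"
    if "x \<in> I" for x
    using P1(2)[of x] P2(2)[of x] that unfolding I_def t1_def t2_def f1_def f2_def by auto
  have DTi: "DT x = ereal (t1 x - t2 x)" and DFi: "DF x = ereal (f1 x - f2 x)" if "x \<in> I" for x
    using Ti[OF that] unfolding DT_def DF_def sr_diff_def by auto
  have nI: "T1 x \<noteq> \<infinity>" "T2 x \<noteq> \<infinity>" "F1 x \<noteq> \<infinity>" "F2 x \<noteq> \<infinity>" if "x \<in> {0..1}" for x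
    using assms(1,2) that unfolding proper_scoring_rule_def by auto
  have finI: "\<bar>T1 x\<bar> \<noteq> \<infinity> \<and> \<bar>T2 x\<bar> \<noteq> \<infinity>" "\<bar>F1 x\<bar> \<noteq> \<infinity> \<and> \<bar>F2 x\<bar> \<noteq> \<infinity>"
    if "x \<in> {0<..<1}" for x
    using Ti[of x] that unfolding I_def by auto
  have KT0: "DT 0 = L" if "(DT \<longlongrightarrow> L) (at 0 within I)" for L
    using KF[OF nontriv0 nI(1,2)[of 0] finI(1) assms(3,5)] that unfolding DT_def I_def by auto
  have KT1: "DT 1 = L" if "(DT \<longlongrightarrow> L) (at 1 within I)" for L
    using KF[OF nontriv1 nI(1,2)[of 1] finI(1) assms(4,6)] that unfolding DT_def I_def by auto
  have KF0: "DF 0 = L" if "(DF \<longlongrightarrow> L) (at 0 within I)" for L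
    using KF[OF nontriv0 nI(3,4)[of 0] finI(2) assms(7,9)] that unfolding DF_def I_def by auto
  have KF1: "DF 1 = L" if "(DF \<longlongrightarrow> L) (at 1 within I)" for L
    using KF[OF nontriv1 nI(3,4)[of 1] finI(2) assms(8,10)] that unfolding DF_def I_def by auto

  define IM where "IM \<longleftrightarrow> (\<forall>u v. 0 < u \<longrightarrow> u \<le> v \<longrightarrow> v < 1 \<longrightarrow> t1 u - t2 u \<le> t1 v - t2 v)"
  define IA where "IA \<longleftrightarrow> (\<forall>u v. 0 < u \<longrightarrow> u \<le> v \<longrightarrow> v < 1 \<longrightarrow> f1 v - f2 v \<le> f1 u - f2 u)"
  define IP where "IP \<longleftrightarrow> rprop (\<lambda>x. t1 x - t2 x) (\<lambda>x. f1 x - f2 x)"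

  have IP_IM: "IP \<Longrightarrow> IM" unfolding IP_def IM_def using rprop_mono by blast
  have IP_IA: "IP \<Longrightarrow> IA" unfolding IP_def IA_def using rprop_mono by blast
  have IM_IP: "IM \<Longrightarrow> IP" unfolding IP_def
    by (rule GM_IP[OF r1 r2], rule IM_GM[OF r1 r2]) (auto simp: IM_def)
  have IA_IP: "IA \<Longrightarrow> IP" unfolding IP_def
    by (rule GM_IP[OF r1 r2], rule IA_GM[OF r1 r2]) (auto simp: IA_def)

  have IM_facts: "(\<forall>x\<in>I. DT 0 \<le> DT x \<and> DT x \<le> DT 1) \<and> (DT \<longlongrightarrow> DT 0) (at 0 within I) \<and> (DT \<longlongrightarrow> DT 1) (at 1 within I)"
    if IM
  proof -
    have hm: "DT u \<le> DT v" if "0 < u" "u \<le> v" "v < 1" for u v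
      using \<open>IM\<close> that DTi[of u] DTi[of v] unfolding IM_def I_def by auto
    have l0: "(DT \<longlongrightarrow> Inf (DT ` I)) (at 0 within I)" unfolding I_def by (rule mono_lim0) (rule hm)
    have l1: "(DT \<longlongrightarrow> Sup (DT ` I)) (at 1 within I)" unfolding I_def by (rule mono_lim1) (rule hm)
    show ?thesis using l0 l1 KT0[OF l0] KT1[OF l1] by (auto intro: INF_lower SUP_upper)
  qed
  have IA_facts: "(\<forall>x\<in>I. DF 1 \<le> DF x \<and> DF x \<le> DF 0) \<and> (DF \<longlongrightarrow> DF 0) (at 0 within I) \<and> (DF \<longlongrightarrow> DF 1) (at 1 within I)"
    if IA
  proof -
    have hm: "DF v \<le> DF u" if "0 < u" "u \<le> v" "v < 1" for u v
      using \<open>IA\<close> that DFi[of u] DFi[of v] unfolding IA_def I_def by auto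
    have l0: "(DF \<longlongrightarrow> Sup (DF ` I)) (at 0 within I)" unfolding I_def by (rule anti_lim0) (rule hm)
    have l1: "(DF \<longlongrightarrow> Inf (DF ` I)) (at 1 within I)" unfolding I_def by (rule anti_lim1) (rule hm)
    show ?thesis using l0 l1 KF0[OF l0] KF1[OF l1] by (auto intro: INF_lower SUP_upper)
  qed
  have half: "1/2 \<in> I" unfolding I_def by auto
  have DT_le1: "DT x \<le> DT 1" and DT_ge0: "DT 0 \<le> DT x" if IM "x \<in> {0..1}" for x
  proof -
    have f: "\<forall>x\<in>I. DT 0 \<le> DT x \<and> DT x \<le> DT 1" using IM_facts[OF \<open>IM\<close>] by blast
    have "DT 0 \<le> DT 1" using f half by (meson order.trans)
    then show "DT x \<le> DT 1" "DT 0 \<le> DT x" using f that unfolding I_def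
      by (cases "x = 0"; cases "x = 1"; auto)+
  qed
  have DF_le0: "DF x \<le> DF 0" and DF_ge1: "DF 1 \<le> DF x" if IA "x \<in> {0..1}" for x
  proof -
    have f: "\<forall>x\<in>I. DF 1 \<le> DF x \<and> DF x \<le> DF 0" using IA_facts[OF \<open>IA\<close>] by blast
    have "DF 1 \<le> DF 0" using f half by (meson order.trans)
    then show "DF x \<le> DF 0" "DF 1 \<le> DF x" using f that unfolding I_def
      by (cases "x = 0"; cases "x = 1"; auto)+
  qed
  have IM_M: "mono_on {0..1} DT" if IM
  proof (rule mono_onI)
    fix u v :: real assume uv: "u \<in> {0..1}" "v \<in> {0..1}" "u \<le> v"
    show "DT u \<le> DT v"
    proof (cases "u = 0 \<or> v = 1")
      case True then show ?thesis using DT_le1[OF \<open>IM\<close>] DT_ge0[OF \<open>IM\<close>] uv by auto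
    next
      case False
      then have "0 < u" "v < 1" using uv by auto
      then show ?thesis using \<open>IM\<close> uv DTi[of u] DTi[of v] unfolding IM_def I_def by auto
    qed
  qed
  have IA_A: "antimono_on {0..1} DF" if IA
  proof (rule monotone_onI)
    fix u v :: real assume uv: "u \<in> {0..1}" "v \<in> {0..1}" "u \<le> v"
    show "DF v \<le> DF u"
    proof (cases "u = 0 \<or> v = 1")
      case True then show ?thesis using DF_le0[OF \<open>IA\<close>] DF_ge1[OF \<open>IA\<close>] uv by auto
    next
      case False
      then have "0 < u" "v < 1" using uv by auto
      then show ?thesis using \<open>IA\<close> uv DFi[of u] DFi[of v] unfolding IA_def I_def by auto
    qed
  qed
  have M_IM: "IM" if "mono_on {0..1} DT"
    unfolding IM_def
  proof (intro allI impI)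
    fix u v :: real assume uv: "0 < u" "u \<le> v" "v < 1"
    have "DT u \<le> DT v" using mono_onD[OF that, of u v] uv by auto
    then show "t1 u - t2 u \<le> t1 v - t2 v" using DTi[of u] DTi[of v] uv unfolding I_def by auto
  qed
  have A_IA: "IA" if "antimono_on {0..1} DF"
    unfolding IA_def
  proof (intro allI impI)
    fix u v :: real assume uv: "0 < u" "u \<le> v" "v < 1"
    have "DF v \<le> DF u" using monotone_onD[OF that, of u v] uv by auto
    then show "f1 v - f2 v \<le> f1 u - f2 u" using DFi[of u] DFi[of v] uv unfolding I_def by auto
  qed
  have P_IP: "IP" if "proper_scoring_rule DT DF"
  proof -
    have rr: "rprop (\<lambda>x. real_of_ereal (DT x)) (\<lambda>x. real_of_ereal (DF x))"
      using proper_real(1)[OF that] .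
    show ?thesis unfolding IP_def rprop_def
    proof (intro ballI)
      fix p q :: real assume p: "p \<in> {0<..<1}" and q: "q \<in> {0<..<1}"
      have "p * real_of_ereal (DT q) + (1 - p) * real_of_ereal (DF q)
          \<le> p * real_of_ereal (DT p) + (1 - p) * real_of_ereal (DF p)"
        using rr p q unfolding rprop_def by blast
      then show "p * (t1 q - t2 q) + (1 - p) * (f1 q - f2 q) \<le> p * (t1 p - t2 p) + (1 - p) * (f1 p - f2 p)"
        using DTi[of p] DTi[of q] DFi[of p] DFi[of q] p q unfolding I_def by simp
    qed
  qed
  have IP_P: "proper_scoring_rule DT DF" if IP
  proof -
    have IM: IM and IA: IA using IP_IM IP_IA \<open>IP\<close> by auto
    have T11: "T1 1 = ereal (real_of_ereal (T1 1))" "T2 1 = ereal (real_of_ereal (T2 1))"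
      using fin_ereal nI[of 1] P1(3) P2(3) by auto
    have F00: "F1 0 = ereal (real_of_ereal (F1 0))" "F2 0 = ereal (real_of_ereal (F2 0))"
      using fin_ereal nI[of 0] P1(4) P2(4) by auto
    obtain a b where ab: "T1 1 = ereal a" "T2 1 = ereal b" using T11 by blast
    have DT1: "\<bar>DT 1\<bar> \<noteq> \<infinity>" unfolding DT_def sr_diff_def ab by simp
    obtain c d where cd: "F1 0 = ereal c" "F2 0 = ereal d" using F00 by blast
    have DF0: "\<bar>DF 0\<bar> \<noteq> \<infinity>" unfolding DF_def sr_diff_def cd by simp
    have DT0: "DT 0 \<noteq> \<infinity>"
    proof -
      have "DT 0 \<le> DT (1/2)" using DT_ge0[OF IM, of "1/2"] by auto
      then show ?thesis using DTi[OF half] by auto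
    qed
    have DF1: "DF 1 \<noteq> \<infinity>"
    proof -
      have "DF 1 \<le> DF (1/2)" using DF_ge1[OF IA, of "1/2"] by auto
      then show ?thesis using DFi[OF half] by auto
    qed
    have fin: "DT p \<noteq> \<infinity> \<and> DF p \<noteq> \<infinity>" if "p \<in> {0..1}" for p
    proof (cases "p = 0 \<or> p = 1")
      case True then show ?thesis using DT0 DT1 DF0 DF1 by auto
    next
      case False then have "p \<in> I" using that unfolding I_def by auto
      then show ?thesis using DTi DFi by auto
    qed
    have inner: "ereal p * DT x + ereal (1 - p) * DF x \<le> ereal p * DT p + ereal (1 - p) * DF p"
      if "p \<in> I" "x \<in> I" for p x
    proof -
      have "p * (t1 x - t2 x) + (1 - p) * (f1 x - f2 x) \<le> p * (t1 p - t2 p) + (1 - p) * (f1 p - f2 p)"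
        using \<open>IP\<close> that unfolding IP_def rprop_def I_def by blast
      then show ?thesis using DTi DFi that by simp
    qed
    have ineq: "ereal p * DT q + ereal (1 - p) * DF q \<le> ereal p * DT p + ereal (1 - p) * DF p"
      if p: "p \<in> {0..1}" and q: "q \<in> {0..1}" for p q
    proof -
      consider "p = 0" | "p = 1" | "p \<in> I" using p unfolding I_def by fastforce
      then show ?thesis
      proof cases
        case 1 then show ?thesis using DF_le0[OF IA q] by (simp add: zero_ereal_def[symmetric])
      next
        case 2 then show ?thesis using DT_le1[OF IM q] by (simp add: zero_ereal_def[symmetric])
      next
        case 3
        have pI: "p \<in> I" using 3 .
        have pp: "0 < p" "p < 1" using 3 unfolding I_def by auto
        define h where "h x = ereal p * DT x + ereal (1 - p) * DF x" for x
        have ev: "eventually (\<lambda>x. h x \<le> h p) (at c within I)" for c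
          unfolding eventually_at_filter h_def by (intro always_eventually) (auto intro: inner[OF pI])
        have lim: "(h \<longlongrightarrow> h c) (at c within I)"
          if "(DT \<longlongrightarrow> DT c) (at c within I)" "(DF \<longlongrightarrow> DF c) (at c within I)" "c \<in> {0..1}" for c
          unfolding h_def
        proof (rule tendsto_add_ereal_general)
          show "\<not> ((ereal p * DT c = \<infinity> \<and> ereal (1 - p) * DF c = - \<infinity>) \<or> (ereal p * DT c = - \<infinity> \<and> ereal (1 - p) * DF c = \<infinity>))"
            using fin[OF that(3)] pp by auto
          show "((\<lambda>x. ereal p * DT x) \<longlongrightarrow> ereal p * DT c) (at c within I)"
            by (rule tendsto_cmult_ereal) (use that in auto)
          show "((\<lambda>x. ereal (1 - p) * DF x) \<longlongrightarrow> ereal (1 - p) * DF c) (at c within I)"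
            by (rule tendsto_cmult_ereal) (use that in auto)
        qed
        consider "q = 0" | "q = 1" | "q \<in> I" using q unfolding I_def by fastforce
        then show ?thesis
        proof cases
          case 1
          have "h 0 \<le> h p"
            using tendsto_upperbound[OF lim ev] IM_facts[OF IM] IA_facts[OF IA] nontriv0 unfolding I_def
            by auto
          then show ?thesis using 1 by (simp add: h_def)
        next
          case 2
          have "h 1 \<le> h p"
            using tendsto_upperbound[OF lim ev] IM_facts[OF IM] IA_facts[OF IA] nontriv1 unfolding I_def
            by auto
          then show ?thesis using 2 by (simp add: h_def)
        next
          case 3
          then show ?thesis using inner[OF pI 3] by simp
        qed
      qed
    qed
    show ?thesis unfolding proper_scoring_rule_def
      using fin ineq DTi DFi unfolding I_def by auto
  qed
  show ?thesis unfolding DT_def[symmetric] DF_def[symmetric]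
    using P_IP IP_IM IM_M M_IM IM_IP IP_IA IA_A A_IA IA_IP IP_P by blast
qed

end
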